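(* Let $i_N=(\pi_N,\varphi_N):\mathcal M(N,K)\to L^-\mathrm{GL}_K\times L^-\mathrm{GL}_1$. Then $\bigcup_N i_N(\mathcal M(N,K))$ is Zariski-dense in $L^-\mathrm{GL}_K\times L^-\mathrm{GL}_1$.
   Context: $\mathcal M(N,K)=\mathrm{Rep}(N,K)/\!/\mathrm{GL}_N$, $\mathrm{Rep}(N,K)$ being triples $(B,\psi,\overline\psi)$ with $B\in\mathrm{Mat}_{N\times N}(\mathbb C)$, $\psi\in\mathrm{Mat}_{N\times K}$, $\overline\psi\in\mathrm{Mat}_{K\times N}$, and $g\cdot(B,\psi,\overline\psi)=(gBg^{-1},g\psi,\overline\psi g^{-1})$. $\widetilde B=B+\psi\overline\psi$. $L^-\mathrm{GL}_K$ is the group scheme of power series $1+\sum_{i\ge1}g_iz^{-i}$, $g_i\in\mathfrak{gl}_K$ (an infinite-dimensional affine space), similarly $L^-\mathrm{GL}_1$ for $K=1$. $\pi_N(B,\psi,\overline\psi)=1+\overline\psi(z-\widetilde B/2)^{-1}\psi$ (expanded in $z^{-1}$), and $\varphi_N(B,\psi,\overline\psi)=z^{-N}\det(z-\widetilde B)$. The maps $i_N$ are closed embeddings compatible with the embeddings $\mathcal M(N,K)\to\mathcal M(N',K)$, $(B,\psi,\overline\psi)\mapsto(\mathrm{diag}(B,0),\binom{\psi}{0},(\overline\psi\ 0))$ for $N<N'$. *)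

theory Defs
  imports Complex_Main "Jordan_Normal_Form.Char_Poly"
begin

text \<open>Coordinates of the infinite-dimensional affine space L^-GL_K x L^-GL_1:
  GC i a b is the (a,b) entry of g_i (coefficient of z^(-i)), i >= 1, a,b < K;
  HC i is the coefficient of z^(-i) of the scalar series, i >= 1.\<close>
datatype coord = GC nat nat nat | HC nat

definition coords :: "nat \<Rightarrow> coord set" where
  "coords K = {GC i a b | i a b. 1 \<le> i \<and> a < K \<and> b < K} \<union> {HC i | i. 1 \<le> i}"

definition loop_space :: "nat \<Rightarrow> (coord \<Rightarrow> complex) set" where
  "loop_space K = {p. \<forall>v. v \<notin> coords K \<longrightarrow> p v = 0}"

inductive_set poly_fun :: "coord set \<Rightarrow> ((coord \<Rightarrow> complex) \<Rightarrow> complex) set"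
  for V :: "coord set" where
  pconst: "(\<lambda>p. c) \<in> poly_fun V"
| pvar: "v \<in> V \<Longrightarrow> (\<lambda>p. p v) \<in> poly_fun V"
| padd: "f \<in> poly_fun V \<Longrightarrow> g \<in> poly_fun V \<Longrightarrow> (\<lambda>p. f p + g p) \<in> poly_fun V"
| pmult: "f \<in> poly_fun V \<Longrightarrow> g \<in> poly_fun V \<Longrightarrow> (\<lambda>p. f p * g p) \<in> poly_fun V"

definition zariski_dense :: "nat \<Rightarrow> (coord \<Rightarrow> complex) set \<Rightarrow> bool" where
  "zariski_dense K S \<longleftrightarrow> S \<subseteq> loop_space K \<and>
     (\<forall>f \<in> poly_fun (coords K). (\<forall>p\<in>S. f p = 0) \<longrightarrow> (\<forall>p\<in>loop_space K. f p = 0))"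

definition Rep :: "nat \<Rightarrow> nat \<Rightarrow> (complex mat \<times> complex mat \<times> complex mat) set" where
  "Rep N K = {(B, psi, psib). B \<in> carrier_mat N N \<and> psi \<in> carrier_mat N K \<and> psib \<in> carrier_mat K N}"

definition Btilde :: "complex mat \<Rightarrow> complex mat \<Rightarrow> complex mat \<Rightarrow> complex mat" where
  "Btilde B psi psib = B + psi * psib"

text \<open>pi_N = 1 + psib (z - Bt/2)^(-1) psi = 1 + sum_{i>=1} psib (Bt/2)^(i-1) psi z^(-i);
  phi_N = z^(-N) det(z - Bt) = sum_{i=0}^N (coeff of z^(N-i) in charpoly Bt) z^(-i).
  i_map K N gives the coordinates of i_N(B,psi,psib).\<close>
definition i_map :: "nat \<Rightarrow> nat \<Rightarrow> complex mat \<Rightarrow> complex mat \<Rightarrow> complex mat \<Rightarrow> coord \<Rightarrow> complex" where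
  "i_map K N B psi psib v = (case v of
     GC i a b \<Rightarrow> (if 1 \<le> i \<and> a < K \<and> b < K then
        (psib * (((1/2) ^ (i - 1)) \<cdot>\<^sub>m (Btilde B psi psib ^\<^sub>m (i - 1))) * psi) $$ (a, b) else 0)
   | HC i \<Rightarrow> (if 1 \<le> i \<and> i \<le> N then coeff (char_poly (Btilde B psi psib)) (N - i) else 0))"

end

theory Submission imports Defs begin

lemma sum_single:
  assumes "finite S" "\<And>j. j \<in> S \<Longrightarrow> j \<noteq> j0 \<Longrightarrow> f j = 0"
  shows "sum f S = (if j0 \<in> S then f j0 else 0)"
  using assms by (cases "j0 \<in> S") (auto simp: sum.remove[of S j0] intro!: sum.neutral)

definition BtM :: "nat \<Rightarrow> nat \<Rightarrow> nat \<Rightarrow> complex list \<Rightarrow> complex mat" where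
  "BtM N K L as = mat N N (\<lambda>(r,c). if r < L then (if c = r + K \<and> c < L then 2 else 0)
       else if c = r then as ! (r - L) else 0)"

lemma BtM_pow:
  assumes "L \<le> N" "r < N" "c < N"
  shows "(BtM N K L as ^\<^sub>m k) $$ (r,c) = (if r < L then (if c = r + k*K \<and> c < L then 2^k else 0)
       else if c = r then (as ! (r - L))^k else 0)"
  using assms(3)
proof (induction k arbitrary: c)
  case 0
  then show ?case using assms by (simp add: BtM_def)
next
  case (Suc k)
  have "(BtM N K L as ^\<^sub>m Suc k) $$ (r,c) = (\<Sum>j\<in>{0..<N}. (BtM N K L as ^\<^sub>m k) $$ (r,j) * BtM N K L as $$ (j,c))"
    using Suc.prems assms by (simp add: index_mult_mat scalar_prod_def BtM_def atLeast0LessThan)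
  also have "\<dots> = (if r < L then (if r + k*K < L then 2^k * BtM N K L as $$ (r + k*K,c) else 0)
       else (as ! (r - L))^k * BtM N K L as $$ (r,c))"
  proof (cases "r < L")
    case True
    have "(\<Sum>j\<in>{0..<N}. (BtM N K L as ^\<^sub>m k) $$ (r,j) * BtM N K L as $$ (j,c)) =
       (if r + k*K \<in> {0..<N} then (BtM N K L as ^\<^sub>m k) $$ (r,r+k*K) * BtM N K L as $$ (r+k*K,c) else 0)"
      by (rule sum_single) (use Suc.IH True in auto)
    then show ?thesis using True Suc.IH assms by auto
  next
    case False
    have "(\<Sum>j\<in>{0..<N}. (BtM N K L as ^\<^sub>m k) $$ (r,j) * BtM N K L as $$ (j,c)) =
       (if r \<in> {0..<N} then (BtM N K L as ^\<^sub>m k) $$ (r,r) * BtM N K L as $$ (r,c) else 0)"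
      by (rule sum_single) (use Suc.IH False in auto)
    then show ?thesis using False Suc.IH assms by auto
  qed
  also have "\<dots> = (if r < L then (if c = r + Suc k*K \<and> c < L then 2^Suc k else 0)
       else if c = r then (as ! (r - L))^Suc k else 0)" using Suc.prems assms by (auto simp: BtM_def algebra_simps)
  finally show ?case .
qed


lemma monic_exists:
  fixes h :: "nat \<Rightarrow> complex"
  shows "\<exists>as. length as = M \<and> (\<forall>j<M. coeff (\<Prod>a\<leftarrow>as. [:- a, 1:]) j = h (M - j))"
proof -
  define q where "q = monom 1 M + (\<Sum>i\<in>{1..M}. monom (h i) (M - i))"
  have cq: "coeff q j = (if j = M then 1 else 0) + (\<Sum>i\<in>{1..M}. if M - i = j then h i else 0)" for j
    unfolding q_def by (simp add: coeff_sum coeff_monom)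
  have cq2: "coeff q j = h (M - j)" if "j < M" for j
  proof -
    have "(\<Sum>i\<in>{1..M}. if M - i = j then h i else 0) = (if M - j \<in> {1..M} then (if M - (M-j) = j then h (M-j) else 0) else 0)"
      by (rule sum_single) auto
    then show ?thesis using that cq by simp
  qed
  have cM: "coeff q M = 1"
  proof -
    have "(\<Sum>i\<in>{1..M}. if M - i = M then h i else 0) = 0"
      by (rule sum.neutral) auto
    then show ?thesis using cq by simp
  qed
  have cgt: "coeff q j = 0" if "j > M" for j
  proof -
    have "(\<Sum>i\<in>{1..M}. if M - i = j then h i else 0) = 0"
      by (rule sum.neutral) (use that in auto)
    then show ?thesis using cq that by simp
  qed
  have dq: "degree q = M"
  proof (rule antisym)
    show "degree q \<le> M" by (rule degree_le) (use cgt in auto)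
    show "M \<le> degree q" by (rule le_degree) (use cM in auto)
  qed
  from fundamental_theorem_algebra_factorized[of q] obtain as where
    "Polynomial.smult (coeff q (degree q)) (\<Prod>a\<leftarrow>as. [:- a, 1:]) = q" "length as = degree q" by blast
  then have "(\<Prod>a\<leftarrow>as. [:- a, 1:]) = q" "length as = M" using dq cM by auto
  then show ?thesis using cq2 by auto
qed

definition psiM :: "nat \<Rightarrow> nat \<Rightarrow> nat \<Rightarrow> (coord \<Rightarrow> complex) \<Rightarrow> complex mat" where
  "psiM N K L p = mat N K (\<lambda>(s,b). if s < L then p (GC (s div K + 1) (s mod K) b) else 0)"

definition psibM :: "nat \<Rightarrow> nat \<Rightarrow> complex mat" where
  "psibM N K = mat K N (\<lambda>(a,r). if r = a then 1 else 0)"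

lemma GC_entry:
  assumes "k < M" "a < K" "b < K" "N = K*M + M"
  shows "(psibM N K * (((1/2) ^ k) \<cdot>\<^sub>m (BtM N K (K*M) as ^\<^sub>m k)) * psiM N K (K*M) p) $$ (a,b)
     = p (GC (k+1) a b)"
proof -
  let ?L = "K*M"
  let ?Y = "((1/2) ^ k) \<cdot>\<^sub>m (BtM N K ?L as ^\<^sub>m k)"
  have KL: "K \<le> ?L" using assms by simp
  have LN: "?L \<le> N" using assms by simp
  have aN: "a < N" using KL LN assms by linarith
  have dims: "dim_row (BtM N K ?L as) = N" "dim_col (BtM N K ?L as) = N" by (auto simp: BtM_def)
  have Y: "?Y $$ (a, s) = (if s = a + k*K then 1 else 0)" if "s < N" for s
  proof -
    have "a + k*K < ?L"
    proof -
      have "a + k*K < K + k*K" using assms by simp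
      also have "\<dots> = (k+1)*K" by simp
      also have "\<dots> \<le> M*K" using assms by (intro mult_right_mono) auto
      finally show ?thesis by (simp add: mult.commute)
    qed
    then show ?thesis using that assms KL LN dims
      by (simp add: BtM_pow power_mult_distrib[symmetric])
  qed
  have PY: "(psibM N K * ?Y) $$ (a, s) = ?Y $$ (a, s)" if "s < N" for s
  proof -
    have "(psibM N K * ?Y) $$ (a, s) = (\<Sum>r\<in>{0..<N}. psibM N K $$ (a,r) * ?Y $$ (r,s))"
      using that assms dims by (simp add: index_mult_mat scalar_prod_def psibM_def atLeast0LessThan)
    also have "\<dots> = (if a \<in> {0..<N} then psibM N K $$ (a,a) * ?Y $$ (a,s) else 0)"
      by (rule sum_single) (use assms aN in \<open>auto simp: psibM_def\<close>)
    also have "\<dots> = ?Y $$ (a, s)" using assms KL LN aN by (simp add: psibM_def)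
    finally show ?thesis .
  qed
  have "(psibM N K * ?Y * psiM N K ?L p) $$ (a,b) = (\<Sum>s\<in>{0..<N}. (psibM N K * ?Y) $$ (a,s) * psiM N K ?L p $$ (s,b))"
    using assms dims by (simp add: index_mult_mat scalar_prod_def psibM_def psiM_def atLeast0LessThan)
  also have "\<dots> = (\<Sum>s\<in>{0..<N}. (if s = a + k*K then 1 else 0) * psiM N K ?L p $$ (s,b))"
    by (rule sum.cong) (auto simp: PY Y)
  also have "\<dots> = (if a + k*K \<in> {0..<N} then psiM N K ?L p $$ (a + k*K,b) else 0)"
    by (subst sum_single[of _ "a+k*K"]) auto
  also have "\<dots> = p (GC (k+1) a b)"
  proof -
    have "a + k*K < K + k*K" using assms by simp
    also have "\<dots> = (k+1)*K" by simp
    also have "\<dots> \<le> M*K" using assms by (intro mult_right_mono) auto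
    finally have lt: "a + k*K < ?L" by (simp add: mult.commute)
    have "(a + k*K) div K = k" "(a + k*K) mod K = a" using assms by auto
    then show ?thesis using lt LN assms by (simp add: psiM_def)
  qed
  finally show ?thesis .
qed


lemma charpoly_BtM:
  assumes "length as = M" "N = K*M + M"
  shows "char_poly (BtM N K (K*M) as) = monom 1 (K*M) * (\<Prod>a\<leftarrow>as. [:- a, 1:])"
proof -
  let ?A = "BtM N K (K*M) as"
  have A: "?A \<in> carrier_mat N N" by (simp add: BtM_def)
  have ut: "upper_triangular ?A" unfolding upper_triangular_def BtM_def by auto
  have d: "diag_mat ?A = replicate (K*M) 0 @ as"
  proof (rule nth_equalityI)
    show "length (diag_mat ?A) = length (replicate (K * M) 0 @ as)"
      using assms by (simp add: diag_mat_def BtM_def)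
    fix i assume "i < length (diag_mat ?A)"
    then have i: "i < N" by (simp add: diag_mat_def BtM_def)
    show "diag_mat ?A ! i = (replicate (K * M) 0 @ as) ! i"
      using i assms by (auto simp: diag_mat_def BtM_def nth_append)
  qed
  show ?thesis
    unfolding char_poly_upper_triangular[OF A ut] d
    by (simp add: monom_altdef)
qed

lemma Rep_mem:
  assumes "Bt \<in> carrier_mat N N" "psi \<in> carrier_mat N K" "psib \<in> carrier_mat K N"
  shows "(Bt - psi * psib, psi, psib) \<in> Rep N K" "Btilde (Bt - psi * psib) psi psib = Bt"
  using assms by (auto simp: Rep_def Btilde_def intro!: eq_matI)


fun idx :: "coord \<Rightarrow> nat" where
  "idx (GC i a b) = i" | "idx (HC i) = i"

lemma realize:
  assumes p: "p \<in> loop_space K" and M: "M \<ge> 1"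
  shows "\<exists>N B psi psib. (B,psi,psib) \<in> Rep N K \<and> (\<forall>v. idx v < M \<longrightarrow> i_map K N B psi psib v = p v)"
proof -
  obtain as where as: "length as = M" "\<And>j. j<M \<Longrightarrow> coeff (\<Prod>a\<leftarrow>as. [:- a, 1:]) j = p (HC (M - j))"
    using monic_exists[of M "\<lambda>i. p (HC i)"] by blast
  define N where "N = K*M + M"
  define Bt where "Bt = BtM N K (K*M) as"
  define psi where "psi = psiM N K (K*M) p"
  define psib where "psib = psibM N K"
  have c: "Bt \<in> carrier_mat N N" "psi \<in> carrier_mat N K" "psib \<in> carrier_mat K N"
    by (auto simp: Bt_def BtM_def psi_def psiM_def psib_def psibM_def)
  note R = Rep_mem[OF c]
  have p0: "p v = 0" if "v \<notin> coords K" for v using p that by (auto simp: loop_space_def)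
  have "i_map K N (Bt - psi * psib) psi psib v = p v" if "idx v < M" for v
  proof (cases v)
    case (GC i a b)
    show ?thesis
    proof (cases "1 \<le> i \<and> a < K \<and> b < K")
      case True
      then have "i - 1 < M" "i - 1 + 1 = i" using that GC by auto
      then show ?thesis using True GC R(2) GC_entry[of "i-1" M a K b N as p]
        by (simp add: i_map_def Bt_def psi_def psib_def N_def)
    next
      case False
      then show ?thesis using GC p0[of v] by (auto simp: i_map_def coords_def)
    qed
  next
    case (HC i)
    show ?thesis
    proof (cases "i = 0")
      case True
      then show ?thesis using HC p0[of v] by (auto simp: i_map_def coords_def)
    next
      case False
      have iM: "i < M" using that HC by simp
      have "coeff (char_poly Bt) (N - i) = coeff (\<Prod>a\<leftarrow>as. [:- a, 1:]) (M - i)"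
        unfolding Bt_def charpoly_BtM[OF as(1) N_def] coeff_monom_mult
        using iM False by (simp add: N_def)
      also have "\<dots> = p (HC i)" using as(2)[of "M - i"] iM False by simp
      finally show ?thesis using HC R(2) False iM by (simp add: i_map_def N_def)
    qed
  qed
  then show ?thesis using R(1) by blast
qed

lemma poly_fun_finite:
  assumes "f \<in> poly_fun V"
  shows "\<exists>F. finite F \<and> F \<subseteq> V \<and> (\<forall>p q. (\<forall>v\<in>F. p v = q v) \<longrightarrow> f p = f q)"
  using assms
proof (induction rule: poly_fun.induct)
  case (pconst c)
  then show ?case by (intro exI[of _ "{}"]) auto
next
  case (pvar v)
  then show ?case by (intro exI[of _ "{v}"]) auto
next
  case (padd f g)
  then obtain F G where "finite F \<and> F \<subseteq> V \<and> (\<forall>p q. (\<forall>v\<in>F. p v = q v) \<longrightarrow> f p = f q)"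
    "finite G \<and> G \<subseteq> V \<and> (\<forall>p q. (\<forall>v\<in>G. p v = q v) \<longrightarrow> g p = g q)" by blast
  then show ?case by (intro exI[of _ "F \<union> G"]) (auto, metis UnCI)
next
  case (pmult f g)
  then obtain F G where "finite F \<and> F \<subseteq> V \<and> (\<forall>p q. (\<forall>v\<in>F. p v = q v) \<longrightarrow> f p = f q)"
    "finite G \<and> G \<subseteq> V \<and> (\<forall>p q. (\<forall>v\<in>G. p v = q v) \<longrightarrow> g p = g q)" by blast
  then show ?case by (intro exI[of _ "F \<union> G"]) (auto, metis UnCI)
qed

theorem mainTheorem5:
  fixes K :: nat
  shows "zariski_dense K (\<Union>N. (\<lambda>(B, psi, psib). i_map K N B psi psib) ` Rep N K)"
  unfolding zariski_dense_def
proof (intro conjI ballI impI)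
  show "(\<Union>N. (\<lambda>(B, psi, psib). i_map K N B psi psib) ` Rep N K) \<subseteq> loop_space K"
  proof
    fix x assume "x \<in> (\<Union>N. (\<lambda>(B, psi, psib). i_map K N B psi psib) ` Rep N K)"
    then obtain N B psi psib where x: "x = i_map K N B psi psib" by auto
    have "x v = 0" if "v \<notin> coords K" for v
      using that unfolding x by (cases v) (auto simp: i_map_def coords_def)
    then show "x \<in> loop_space K" by (auto simp: loop_space_def)
  qed
next
  fix f p
  assume f: "f \<in> poly_fun (coords K)"
    and van: "\<forall>q\<in>(\<Union>N. (\<lambda>(B, psi, psib). i_map K N B psi psib) ` Rep N K). f q = 0"
    and p: "p \<in> loop_space K"
  obtain F where F: "finite F" "\<And>p q. (\<forall>v\<in>F. p v = q v) \<Longrightarrow> f p = f q"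
    using poly_fun_finite[OF f] by blast
  define M where "M = Suc (Max (insert 0 (idx ` F)))"
  have FM: "idx v < M" if "v \<in> F" for v
    using F(1) that unfolding M_def by (simp add: le_imp_less_Suc)
  obtain N B psi psib where R: "(B,psi,psib) \<in> Rep N K"
    and eq: "\<forall>v. idx v < M \<longrightarrow> i_map K N B psi psib v = p v"
    using realize[OF p, of M] unfolding M_def by auto
  have "f p = f (i_map K N B psi psib)" using F(2) eq FM by metis
  also have "\<dots> = 0" using van R by fastforce
  finally show "f p = 0" .
qed

end
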